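(* Let $k\ge5$ be an integer, let $\ell=1$, and let $G$ be a finite digraph. Then $$s_X(G)\le\frac{(k-1)^{k-1}}{(k+1)^{k+1}}\alpha^{k+2}.$$
   Context: Digraphs are finite, without loops; $xy$ denotes an arc from $x$ to $y$; two vertices are adjacent if at least one of $xy,yx$ is an arc. The oriented star $S_{k,1}$ has a center $c$, a set $O$ of $k$ out-leaves and one in-leaf $i$; its arcs are exactly $co$ ($o\in O$) and $ic$. For a digraph $G$ on $n$ vertices, let $\phi$ be a uniformly random map from $V(S_{k,1})$ to $V(G)$ (all $n^{k+2}$ maps equally likely), and let $\mathcal S$ be the set of maps $\phi$ that are isomorphisms from $S_{k,1}$ onto $G[\mathrm{Im}\,\phi]$ (in particular injective). $\rho(v)$ is the number of vertices adjacent to $v$ divided by $n$. $X=\{v:\rho(v)\ge1/2\}$, $\alpha=|X|/n$, and $s_X(G)=\Pr[\phi\in\mathcal S,\ \mathrm{Im}\,\phi\subseteq X]$. *)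

theory Defs
  imports Complex_Main "HOL-Library.FuncSet"
begin

text \<open>The oriented star S_{k,1} has vertex set {0..k+1}: 0 is the center c, 1 is the in-leaf i,
and 2..k+1 are the k out-leaves.\<close>

definition star_arc :: "nat \<Rightarrow> nat \<Rightarrow> bool" where
  "star_arc u w \<longleftrightarrow> (u = 0 \<and> 2 \<le> w) \<or> (u = 1 \<and> w = 0)"

definition adj :: "('a \<Rightarrow> 'a \<Rightarrow> bool) \<Rightarrow> 'a \<Rightarrow> 'a \<Rightarrow> bool" where
  "adj A x y \<longleftrightarrow> A x y \<or> A y x"

definition rho :: "'a set \<Rightarrow> ('a \<Rightarrow> 'a \<Rightarrow> bool) \<Rightarrow> 'a \<Rightarrow> real" where
  "rho V A v = real (card {u \<in> V. adj A v u}) / real (card V)"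

definition Xset :: "'a set \<Rightarrow> ('a \<Rightarrow> 'a \<Rightarrow> bool) \<Rightarrow> 'a set" where
  "Xset V A = {v \<in> V. rho V A v \<ge> 1/2}"

definition alpha :: "'a set \<Rightarrow> ('a \<Rightarrow> 'a \<Rightarrow> bool) \<Rightarrow> real" where
  "alpha V A = real (card (Xset V A)) / real (card V)"

definition star_iso :: "nat \<Rightarrow> ('a \<Rightarrow> 'a \<Rightarrow> bool) \<Rightarrow> (nat \<Rightarrow> 'a) \<Rightarrow> bool" where
  "star_iso k A phi \<longleftrightarrow> inj_on phi {0..k+1} \<and>
     (\<forall>u\<in>{0..k+1}. \<forall>w\<in>{0..k+1}. A (phi u) (phi w) \<longleftrightarrow> star_arc u w)"

definition sX :: "nat \<Rightarrow> 'a set \<Rightarrow> ('a \<Rightarrow> 'a \<Rightarrow> bool) \<Rightarrow> real" where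
  "sX k V A = real (card {phi \<in> {0..k+1} \<rightarrow>\<^sub>E V. star_iso k A phi \<and> phi ` {0..k+1} \<subseteq> Xset V A})
              / real (card V) ^ (k + 2)"

end

theory Submission
  imports Defs "HOL-Analysis.Analysis"
begin

lemma amgm:
  fixes p b c s :: real and k :: nat
  assumes k: "k \<ge> 2" and "p \<ge> 0" "b \<ge> 0" "c \<ge> 0" "p + b + c \<le> s"
  shows "p * b * c ^ (k - 1) \<le> real (k - 1) ^ (k - 1) / real (k + 1) ^ (k + 1) * s ^ (k + 1)"
proof -
  define x where "x = (\<lambda>j::nat. if j = 0 then p else if j = 1 then b else c / real (k - 1))"
  have S: "{0..k} = insert 0 (insert 1 {2..k})" using k by auto
  have x0: "\<And>i. x i \<ge> 0" using assms by (simp add: x_def)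
  have cardS: "card {0..k} = k + 1" by simp
  have k1: "real (k - 1) > 0" using k by simp
  have sumx: "(\<Sum>i\<in>{0..k}. x i) = p + b + c"
  proof -
    have "(\<Sum>i\<in>{0..k}. x i) = p + b + (\<Sum>i\<in>{2..k}. c / real (k - 1))"
      unfolding S using k by (simp add: x_def of_nat_diff)
    also have "(\<Sum>i\<in>{2..k}. c / real (k - 1)) = c" using k1 k by (simp add: of_nat_diff)
    finally show ?thesis .
  qed
  have prodx: "(\<Prod>i\<in>{0..k}. x i) = p * b * (c / real (k - 1)) ^ (k - 1)"
    unfolding S using k by (simp add: x_def of_nat_diff)
  have am: "(\<Sum>i\<in>{0..k}. x i / card {0..k}) \<ge> (\<Prod>i\<in>{0..k}. x i) powr (1 / card {0..k})"
    by (rule arith_geom_mean) (auto simp: x0)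
  have lhs: "(\<Sum>i\<in>{0..k}. x i / card {0..k}) = (p + b + c) / real (k + 1)"
    using sumx by (simp add: sum_divide_distrib[symmetric] cardS)
  have P0: "(\<Prod>i\<in>{0..k}. x i) \<ge> 0" by (simp add: prod_nonneg x0)
  have "((\<Prod>i\<in>{0..k}. x i) powr (1 / real (k+1))) ^ (k+1) = (\<Prod>i\<in>{0..k}. x i)"
  proof (cases "(\<Prod>i\<in>{0..k}. x i) = 0")
    case True show ?thesis unfolding True by simp
  next
    case False
    hence pos: "(\<Prod>i\<in>{0..k}. x i) > 0" using P0 by linarith
    have "((\<Prod>i\<in>{0..k}. x i) powr (1 / real (k+1))) ^ (k+1)
        = ((\<Prod>i\<in>{0..k}. x i) powr (1 / real (k+1))) powr real (k+1)"
      by (rule powr_realpow[symmetric]) (simp only: powr_gt_zero False, simp)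
    also have "\<dots> = (\<Prod>i\<in>{0..k}. x i)" using P0 by (simp add: powr_powr)
    finally show ?thesis .
  qed
  have "(\<Prod>i\<in>{0..k}. x i) \<le> ((p + b + c) / real (k + 1)) ^ (k+1)"
  proof -
    have "(\<Prod>i\<in>{0..k}. x i) powr (1 / real (k+1)) \<le> (p + b + c) / real (k + 1)"
      using am lhs cardS by simp
    hence "((\<Prod>i\<in>{0..k}. x i) powr (1 / real (k+1))) ^ (k+1) \<le> ((p + b + c) / real (k + 1)) ^ (k+1)"
      by (intro power_mono) auto
    thus ?thesis using \<open>((\<Prod>i\<in>{0..k}. x i) powr (1 / real (k+1))) ^ (k+1) = _\<close> by simp
  qed
  also have "\<dots> \<le> (s / real (k + 1)) ^ (k+1)"
    using assms by (intro power_mono divide_right_mono) auto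
  finally have "p * b * c ^ (k - 1) / real (k-1) ^ (k-1) \<le> s ^ (k+1) / real (k + 1) ^ (k+1)"
    unfolding prodx by (simp add: power_divide)
  thus ?thesis using k1 by (simp add: field_simps)
qed

lemma count_bound:
  fixes k :: nat and V :: "'a set" and A :: "'a \<Rightarrow> 'a \<Rightarrow> bool"
  assumes k: "k \<ge> 2" and finX: "finite X"
    and irr: "\<forall>x. \<not> A x x"
  shows "real (card {phi \<in> {0..k+1} \<rightarrow>\<^sub>E V. star_iso k A phi \<and> phi ` {0..k+1} \<subseteq> X})
     \<le> real (k - 1) ^ (k - 1) / real (k + 1) ^ (k + 1) * real (card X) ^ (k + 2)"
proof -
  define K where "K = real (k - 1) ^ (k - 1) / real (k + 1) ^ (k + 1)"
  define m where "m = card X"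
  define Nin where "Nin v = {c \<in> X. A c v}" for v
  define B where "B v c = {x \<in> X. \<not> A c x \<and> \<not> adj A v x \<and> x \<noteq> v}" for v c
  define C where "C v c = {x \<in> X. A c x \<and> \<not> adj A v x \<and> x \<noteq> v}" for v c
  define F where "F v c = (\<lambda>j::nat. if j = 0 then {c} else if j = 1 then B v c else if j = 2 then {v} else C v c)" for v c
  let ?S = "{phi \<in> {0..k+1} \<rightarrow>\<^sub>E V. star_iso k A phi \<and> phi ` {0..k+1} \<subseteq> X}"
  have K0: "K \<ge> 0" unfolding K_def by simp
  have sub: "?S \<subseteq> (\<Union>v\<in>X. \<Union>c\<in>Nin v. PiE {0..k+1} (F v c))"
  proof
    fix phi assume "phi \<in> ?S"
    hence ext: "phi \<in> {0..k+1} \<rightarrow>\<^sub>E V" and inj: "inj_on phi {0..k+1}"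
      and ar: "\<And>u w. u \<in> {0..k+1} \<Longrightarrow> w \<in> {0..k+1} \<Longrightarrow> A (phi u) (phi w) \<longleftrightarrow> star_arc u w"
      and im: "phi ` {0..k+1} \<subseteq> X"
      unfolding star_iso_def by auto
    have inX: "\<And>j. j \<le> k+1 \<Longrightarrow> phi j \<in> X" using im by auto
    have ne: "\<And>u w. u \<le> k+1 \<Longrightarrow> w \<le> k+1 \<Longrightarrow> u \<noteq> w \<Longrightarrow> phi u \<noteq> phi w"
      using inj unfolding inj_on_def by auto
    have "phi 2 \<in> X" "phi 0 \<in> Nin (phi 2)"
      using inX[of 2] inX[of 0] ar[of 0 2] k by (auto simp: Nin_def star_arc_def)
    moreover have "phi \<in> PiE {0..k+1} (F (phi 2) (phi 0))"
    proof (rule PiE_I)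
      fix j assume j: "j \<in> {0..k+1}"
      show "phi j \<in> F (phi 2) (phi 0) j"
      proof -
        consider "j = 0" | "j = 1" | "j = 2" | "j \<ge> 3" by linarith
        thus ?thesis
        proof cases
          case 2
          then show ?thesis using inX[of 1] ar[of 0 1] ar[of 1 2] ar[of 2 1] ne[of 1 2] k
            by (auto simp: F_def B_def adj_def star_arc_def)
        next
          case 4
          then show ?thesis using j inX[of j] ar[of 0 j] ar[of j 2] ar[of 2 j] ne[of j 2] k
            by (auto simp: F_def C_def adj_def star_arc_def)
        qed (auto simp: F_def)
      qed
    next
      fix j assume "j \<notin> {0..k+1}"
      thus "phi j = undefined" using ext by (auto simp: PiE_def extensional_def)
    qed
    ultimately show "phi \<in> (\<Union>v\<in>X. \<Union>c\<in>Nin v. PiE {0..k+1} (F v c))" by blast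
  qed
  have finN: "finite (Nin v)" for v using finX unfolding Nin_def by simp
  have cardPi: "card (PiE {0..k+1} (F v c)) = card (B v c) * card (C v c) ^ (k - 1)" for v c
  proof -
    have S: "{0..k+1} = insert 0 (insert 1 (insert 2 {3..k+1}))" using k by auto
    have "card (PiE {0..k+1} (F v c)) = (\<Prod>j\<in>{0..k+1}. card (F v c j))"
      by (rule card_PiE) simp
    also have "\<dots> = card (B v c) * (\<Prod>j\<in>{3..k+1}. card (C v c))"
      unfolding S by (simp add: F_def)
    also have "(\<Prod>j\<in>{3..k+1}. card (C v c)) = card (C v c) ^ (k - 1)"
      using k by simp
    finally show ?thesis .
  qed
  have per_o: "(\<Sum>c\<in>Nin v. real (card (B v c) * card (C v c) ^ (k - 1))) \<le> K * real m ^ (k+1)"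
    if v: "v \<in> X" for v
  proof (cases "Nin v = {}")
    case True thus ?thesis using K0 by simp
  next
    case False
    define p where "p = card (Nin v)"
    have p0: "p > 0" using False finN unfolding p_def by (simp add: card_gt_0_iff)
    have trm: "real (card (B v c) * card (C v c) ^ (k - 1)) \<le> K * real m ^ (k+1) / real p"
      if c: "c \<in> Nin v" for c
    proof -
      have d1: "Nin v \<inter> B v c = {}" "Nin v \<inter> C v c = {}" "B v c \<inter> C v c = {}"
        by (auto simp: Nin_def B_def C_def adj_def)
      have fB: "finite (B v c)" "finite (C v c)" using finX by (auto simp: B_def C_def)
      have "card (Nin v \<union> B v c \<union> C v c) = p + card (B v c) + card (C v c)"
        using d1 fB finN unfolding p_def by (simp add: card_Un_disjoint Int_Un_distrib2)
      moreover have "card (Nin v \<union> B v c \<union> C v c) \<le> m"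
        unfolding m_def by (rule card_mono[OF finX]) (auto simp: Nin_def B_def C_def)
      ultimately have sum: "real p + real (card (B v c)) + real (card (C v c)) \<le> real m" by linarith
      have "real p * real (card (B v c)) * real (card (C v c)) ^ (k - 1) \<le> K * real m ^ (k+1)"
        unfolding K_def by (rule amgm[OF k _ _ _ sum]) auto
      thus ?thesis using p0 by (simp add: field_simps)
    qed
    have "(\<Sum>c\<in>Nin v. real (card (B v c) * card (C v c) ^ (k - 1))) \<le> (\<Sum>c\<in>Nin v. K * real m ^ (k+1) / real p)"
      by (rule sum_mono) (rule trm)
    also have "\<dots> = K * real m ^ (k+1)" using p0 unfolding p_def by simp
    finally show ?thesis .
  qed
  have "card ?S \<le> card (\<Union>v\<in>X. \<Union>c\<in>Nin v. PiE {0..k+1} (F v c))"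
    by (rule card_mono[OF _ sub]) (auto simp: finX finN F_def B_def C_def intro!: finite_PiE)
  also have "\<dots> \<le> (\<Sum>v\<in>X. card (\<Union>c\<in>Nin v. PiE {0..k+1} (F v c)))"
    by (rule card_UN_le[OF finX])
  also have "\<dots> \<le> (\<Sum>v\<in>X. \<Sum>c\<in>Nin v. card (PiE {0..k+1} (F v c)))"
    by (rule sum_mono) (rule card_UN_le[OF finN])
  finally have "real (card ?S) \<le> real (\<Sum>v\<in>X. \<Sum>c\<in>Nin v. card (B v c) * card (C v c) ^ (k - 1))"
    unfolding cardPi by linarith
  also have "\<dots> = (\<Sum>v\<in>X. \<Sum>c\<in>Nin v. real (card (B v c) * card (C v c) ^ (k - 1)))"
    by simp
  also have "\<dots> \<le> (\<Sum>v\<in>X. K * real m ^ (k+1))"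
    by (rule sum_mono) (rule per_o)
  also have "\<dots> = K * real m ^ (k+2)" unfolding m_def by simp
  finally show ?thesis unfolding K_def m_def .
qed

theorem claim4p9:
  fixes k :: nat and V :: "'a set" and A :: "'a \<Rightarrow> 'a \<Rightarrow> bool"
  assumes "k \<ge> 5"
    and "finite V"
    and "\<forall>x y. A x y \<longrightarrow> x \<in> V \<and> y \<in> V"
    and "\<forall>x. \<not> A x x"
  shows "sX k V A \<le> (real (k - 1) ^ (k - 1) / real (k + 1) ^ (k + 1)) * alpha V A ^ (k + 2)"
proof -
  have finX: "finite (Xset V A)" using assms(2) unfolding Xset_def by simp
  have "sX k V A \<le> real (k - 1) ^ (k - 1) / real (k + 1) ^ (k + 1) * real (card (Xset V A)) ^ (k + 2) / real (card V) ^ (k + 2)"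
    unfolding sX_def by (rule divide_right_mono) (use count_bound[of k "Xset V A" A V] finX assms(1,4) in auto)
  thus ?thesis unfolding alpha_def by (simp add: power_divide)
qed

end
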